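(* Let $\mathscr{C}=\{C_j\}_{j\in I}$ be a polycylinder packing of $\mathbb{R}^{n+2}$, fix $i\in I$, and let $x$ be a point of the core $a_i$ of $C_i$. Then every vertex of the Dirichlet slice $d_x$ is not closer to the circle $S_x(1)$ than the vertices of a regular hexagon circumscribed about $S_x(1)$; that is, every vertex $v$ of $d_x$ satisfies $|v-x|\ge 2/\sqrt{3}$.
   Context: A polycylinder is a subset of $\mathbb{R}^{n+2}$ isometric to $\mathbb{D}^2\times\mathbb{R}^n$, where $\mathbb{D}^2$ is the closed unit disk. A polycylinder packing of $\mathbb{R}^{n+2}$ is a countable family of polycylinders with mutually disjoint interiors. The core $a_j$ of a polycylinder $C_j$ is the $n$-dimensional affine subspace such that $C_j$ is the set of points at distance at most $1$ from $a_j$. The Dirichlet cell $D_i$ of $C_i$ is the set of points of $\mathbb{R}^{n+2}$ no further from $C_i$ than from any other polycylinder of the packing. For $x\in a_i$, $p_x$ is the $2$-dimensional affine plane through $x$ orthogonal to $a_i$, the Dirichlet slice is $d_x=D_i\cap p_x$, and $S_x(r)$ denotes the circle of radius $r$ in $p_x$ centered at $x$. A vertex of $d_x$ is a boundary point of $d_x$ at which $C_i$ and at least two other polycylinders of the packing are equidistant (i.e. where two boundary arcs of $d_x$ meet). *)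

theory Defs
  imports "HOL-Analysis.Analysis"
begin

text \<open>A polycylinder in a Euclidean space of dimension n+2 is determined by its core,
an affine subspace of dimension n = DIM - 2; the polycylinder is the set of points
at distance at most 1 from the core.\<close>

definition is_core :: "'a::euclidean_space set \<Rightarrow> bool" where
  "is_core a \<longleftrightarrow> affine a \<and> a \<noteq> {} \<and> aff_dim a = int DIM('a) - 2"

definition polycyl :: "'a::euclidean_space set \<Rightarrow> 'a set" where
  "polycyl a = {y. infdist y a \<le> 1}"

definition polycyl_packing :: "'i set \<Rightarrow> ('i \<Rightarrow> 'a::euclidean_space set) \<Rightarrow> bool" where
  "polycyl_packing I a \<longleftrightarrow> countable I \<and> (\<forall>j\<in>I. is_core (a j)) \<and>
     (\<forall>j\<in>I. \<forall>k\<in>I. j \<noteq> k \<longrightarrow> interior (polycyl (a j)) \<inter> interior (polycyl (a k)) = {})"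

definition dirichlet_cell :: "'i set \<Rightarrow> ('i \<Rightarrow> 'a::euclidean_space set) \<Rightarrow> 'i \<Rightarrow> 'a set" where
  "dirichlet_cell I a i =
     {y. \<forall>j\<in>I. infdist y (polycyl (a i)) \<le> infdist y (polycyl (a j))}"

definition orth_plane :: "'a::euclidean_space set \<Rightarrow> 'a \<Rightarrow> 'a set" where
  "orth_plane a x = {y. \<forall>z\<in>a. inner (y - x) (z - x) = 0}"

definition dirichlet_slice :: "'i set \<Rightarrow> ('i \<Rightarrow> 'a::euclidean_space set) \<Rightarrow> 'i \<Rightarrow> 'a \<Rightarrow> 'a set" where
  "dirichlet_slice I a i x = dirichlet_cell I a i \<inter> orth_plane (a i) x"

definition slice_vertex :: "'i set \<Rightarrow> ('i \<Rightarrow> 'a::euclidean_space set) \<Rightarrow> 'i \<Rightarrow> 'a \<Rightarrow> 'a \<Rightarrow> bool" where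
  "slice_vertex I a i x v \<longleftrightarrow>
     v \<in> dirichlet_slice I a i x \<and> v \<in> rel_frontier (dirichlet_slice I a i x) \<and>
     (\<exists>j\<in>I. \<exists>k\<in>I. j \<noteq> i \<and> k \<noteq> i \<and> j \<noteq> k \<and>
        infdist v (polycyl (a j)) = infdist v (polycyl (a i)) \<and>
        infdist v (polycyl (a k)) = infdist v (polycyl (a i)))"

end

theory Submission
  imports Defs
begin

lemma three_pts:
  fixes a b c :: "'a::real_inner"
  assumes "norm a \<le> R" "norm b \<le> R" "norm c \<le> R"
    "2 \<le> norm (a-b)" "2 \<le> norm (a-c)" "2 \<le> norm (b-c)"
  shows "4 \<le> 3*R^2"
proof -
  have sq: "u \<le> R \<Longrightarrow> u\<^sup>2 \<le> R\<^sup>2" if "0 \<le> u" for u :: real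
    using that by (simp add: power_mono)
  have "4 \<le> (norm (a-b))^2" "4 \<le> (norm (a-c))^2" "4 \<le> (norm (b-c))^2"
    using assms(4-6) power_mono[of 2 _ 2] by force+
  moreover have "(norm (a-b))^2 = inner a a + inner b b - 2 * inner a b"
    "(norm (a-c))^2 = inner a a + inner c c - 2 * inner a c"
    "(norm (b-c))^2 = inner b b + inner c c - 2 * inner b c"
    by (simp_all add: power2_norm_eq_inner inner_diff inner_commute)
  moreover have "0 \<le> (norm (a+b+c))^2" by simp
  moreover have "(norm (a+b+c))^2 = inner a a + inner b b + inner c c
      + 2 * inner a b + 2 * inner a c + 2 * inner b c"
    by (simp add: power2_norm_eq_inner inner_add inner_commute)
  moreover have "inner a a \<le> R^2" "inner b b \<le> R^2" "inner c c \<le> R^2"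
    using sq[OF norm_ge_zero] assms(1-3) by (simp_all add: power2_norm_eq_inner[symmetric])
  ultimately show ?thesis by linarith
qed

lemma core_closed:
  fixes A :: "'a::euclidean_space set"
  assumes "is_core A" shows "closed A"
proof -
  have "affine A" using assms by (simp add: is_core_def)
  then have "affine hull A = A" by (simp add: hull_same)
  then show ?thesis by (metis closed_affine_hull)
qed

lemma core_sub_interior:
  fixes A :: "'a::euclidean_space set"
  assumes "q \<in> A" shows "ball q 1 \<subseteq> interior (polycyl A)"
proof -
  have "ball q 1 \<subseteq> polycyl A"
    using assms by (auto simp: polycyl_def intro!: infdist_le2[of q] simp: dist_commute)
  then show ?thesis by (simp add: interior_maximal)
qed

lemma cores_far:
  fixes A B :: "'a::euclidean_space set"
  assumes "interior (polycyl A) \<inter> interior (polycyl B) = {}" "p \<in> A" "q \<in> B"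
  shows "2 \<le> norm (p - q)"
proof (rule ccontr)
  assume "\<not> 2 \<le> norm (p - q)"
  define m where "m = midpoint p q"
  have "dist p m < 1" "dist q m < 1"
  proof -
    have "dist p m = dist p q / 2" "dist q m = dist p q / 2"
      by (simp_all add: m_def dist_midpoint dist_commute)
    moreover have "dist p q < 2" using \<open>\<not> 2 \<le> norm (p - q)\<close> by (simp add: dist_norm)
    ultimately show "dist p m < 1" "dist q m < 1" by simp_all
  qed
  then have "m \<in> interior (polycyl A)" "m \<in> interior (polycyl B)"
    using core_sub_interior[OF assms(2)] core_sub_interior[OF assms(3)] by auto
  then show False using assms(1) by auto
qed

lemma core_near:
  fixes A :: "'a::euclidean_space set"
  assumes "is_core A"
  obtains q where "q \<in> A" "dist v q \<le> infdist v (polycyl A) + 1"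
proof -
  have cl: "closed A" using core_closed[OF assms] .
  have ne: "A \<noteq> {}" using assms by (simp add: is_core_def)
  have clP: "closed (polycyl A)"
    unfolding polycyl_def
    by (intro closed_Collect_le continuous_on_infdist continuous_on_const continuous_on_id)
  have neP: "polycyl A \<noteq> {}" proof -
    obtain z where "z \<in> A" using ne by blast
    then have "z \<in> polycyl A" by (simp add: polycyl_def)
    then show ?thesis by blast
  qed
  obtain p where p: "p \<in> polycyl A" "infdist v (polycyl A) = dist v p"
    using infdist_attains_inf[OF clP neP] by blast
  obtain q where q: "q \<in> A" "infdist v A = dist v q"
    using infdist_attains_inf[OF cl ne] by blast
  have "infdist v A \<le> infdist p A + dist v p" by (rule infdist_triangle)
  also have "infdist p A \<le> 1" using p(1) by (simp add: polycyl_def)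
  finally show ?thesis using that q p by auto
qed

lemma own_dist:
  fixes A :: "'a::euclidean_space set"
  assumes "x \<in> A"
  shows "infdist v (polycyl A) \<le> max (dist v x - 1) 0"
proof (cases "dist v x \<le> 1")
  case True
  then have "v \<in> polycyl A" using assms by (auto simp: polycyl_def intro: infdist_le2)
  then show ?thesis by simp
next
  case False
  define r where "r = dist v x"
  define p where "p = x + (1/r) *\<^sub>R (v - x)"
  have r1: "r > 1" using False r_def by simp
  have "v \<noteq> x" using r1 r_def by auto
  then have "dist p x = 1" using r1 by (simp add: p_def r_def dist_norm)
  then have "p \<in> polycyl A" using assms by (auto simp: polycyl_def intro: infdist_le2)
  moreover have "dist v p = r - 1"
  proof -
    have "v - p = (1 - 1/r) *\<^sub>R (v - x)" by (simp add: p_def algebra_simps)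
    then have "dist v p = \<bar>1 - 1/r\<bar> * r" by (simp add: dist_norm r_def)
    also have "\<dots> = r - 1" using r1 by (simp add: field_simps)
    finally show ?thesis .
  qed
  ultimately show ?thesis using r_def by (metis infdist_le2 max.coboundedI1 order_refl)
qed

theorem mainTheorem5:
  fixes I :: "'i set" and a :: "'i \<Rightarrow> 'a::euclidean_space set"
    and i :: 'i and x v :: 'a
  assumes "DIM('a) \<ge> 2"
    and "polycyl_packing I a"
    and "i \<in> I"
    and "x \<in> a i"
    and "slice_vertex I a i x v"
  shows "dist v x \<ge> 2 / sqrt 3"
proof -
  obtain j k where jk: "j \<in> I" "k \<in> I" "j \<noteq> i" "k \<noteq> i" "j \<noteq> k"
    "infdist v (polycyl (a j)) = infdist v (polycyl (a i))"
    "infdist v (polycyl (a k)) = infdist v (polycyl (a i))"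
    using assms(5) unfolding slice_vertex_def by blast
  have pk: "\<forall>j\<in>I. is_core (a j)"
    "\<forall>j\<in>I. \<forall>k\<in>I. j \<noteq> k \<longrightarrow> interior (polycyl (a j)) \<inter> interior (polycyl (a k)) = {}"
    using assms(2) by (auto simp: polycyl_packing_def)
  define r where "r = dist v x"
  define R where "R = max r 1"
  have di: "infdist v (polycyl (a i)) \<le> max (r - 1) 0"
    using own_dist[OF assms(4)] r_def by simp
  obtain qj where qj: "qj \<in> a j" "dist v qj \<le> infdist v (polycyl (a j)) + 1"
    using core_near pk(1) jk(1) by blast
  obtain qk where qk: "qk \<in> a k" "dist v qk \<le> infdist v (polycyl (a k)) + 1"
    using core_near pk(1) jk(2) by blast
  have n1: "norm (x - v) \<le> R" using r_def R_def by (simp add: dist_norm norm_minus_commute)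
  have n2: "norm (qj - v) \<le> R" using qj(2) jk(6) di R_def by (simp add: dist_norm norm_minus_commute)
  have n3: "norm (qk - v) \<le> R" using qk(2) jk(7) di R_def by (simp add: dist_norm norm_minus_commute)
  have d1: "2 \<le> norm (x - qj)" using cores_far pk(2) assms(3) jk assms(4) qj(1) by metis
  have d2: "2 \<le> norm (x - qk)" using cores_far pk(2) assms(3) jk assms(4) qk(1) by metis
  have d3: "2 \<le> norm (qj - qk)" using cores_far pk(2) jk qj(1) qk(1) by metis
  have "4 \<le> 3 * R^2"
    using three_pts[OF n1 n2 n3] d1 d2 d3 by simp
  then have R2: "4/3 \<le> R^2" by simp
  have "R = r"
  proof (rule ccontr)
    assume "R \<noteq> r"
    then have "R = 1" using R_def by auto
    then show False using R2 by simp
  qed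
  then have "4/3 \<le> r^2" using R2 by simp
  moreover have "0 \<le> r" using r_def by simp
  ultimately have "sqrt (4/3) \<le> r" by (metis real_le_rsqrt real_sqrt_le_mono real_sqrt_abs abs_of_nonneg)
  moreover have "sqrt (4/3) = 2 / sqrt 3"
    by (simp add: real_sqrt_divide)
  ultimately show ?thesis using r_def by simp
qed

end
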